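(* Let $I$ be a resident-minimal instance, $I'$ a resident-changeless and hospital-complete extension of $I$, and $(P,Y)$ a prescription for $I'$. Then $(P,X)$, where $X=Y\cup(\mathrm{rej}(I')\setminus\mathrm{rej}(I))$, is a (general) prescription for $I$.
   Context: An instance $I$ consists of finite disjoint sets $R$ (residents) and $H$ (hospitals), a positive integer quota $q_h$ for each $h\in H$, for each $r\in R$ a preference list of $r$ (a sequence of distinct members of $H$, not necessarily all), and for each $h\in H$ a preference list of $h$ (a sequence of distinct members of $R$). A list is complete if it contains every member of the opposite side; an instance is hospital-complete if every hospital's list is complete. A match is a pair $(r,h)\in R\times H$. For a set $M$ of matches, $\mathrm{res}_h M=\{r:(r,h)\in M\}$, $\mathrm{res}\,M=\{r:(r,h)\in M\text{ for some }h\}$. $J$ is an extension of $I$ (same $R,H$, quotas) if every list of $J$ has the corresponding list of $I$ as a prefix; it is resident-changeless if every resident's list is the same in $I$ and $J$. An event is $(r,h)^+$ (proposal) or $(r,h)^-$ (rejection). For an event sequence $\sigma$, $\mathrm{prop}(\sigma)$, $\mathrm{rej}(\sigma)$ are the sets of matches proposed/rejected in $\sigma$, $\mathrm{tent}(\sigma)=\mathrm{prop}(\sigma)\setminus\mathrm{rej}(\sigma)$, and $\mathrm{pend}_I(\sigma)$ is the set of $(r,h)\in\mathrm{tent}(\sigma)$ with $r$ not on the list of $h$ in $I$. A match $(r,h)\in M$ is ousted from $M$ in $I$ if the list of $h$ in $I$ contains at least $q_h$ residents of $\mathrm{res}_h M$ and either $r$ is not on it or $r$ is preceded on it by at least $q_h$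 residents of $\mathrm{res}_h M$. $I$-feasible sequences: the empty sequence is $I$-feasible; if $\sigma$ is $I$-feasible then $\sigma+(r,h)^+$ is $I$-feasible if $r\notin\mathrm{res}\,\mathrm{tent}(\sigma)$, $(r,h)\notin\mathrm{prop}(\sigma)$, $h$ is on the list of $r$ in $I$ and $(r,h')\in\mathrm{rej}(\sigma)$ for every $h'$ preceding $h$ on it; and $\sigma+(r,h)^-$ is $I$-feasible if $(r,h)$ is ousted from $\mathrm{prop}(\sigma)$ in $I$ and $(r,h)\notin\mathrm{rej}(\sigma)$. All maximal $I$-feasible sequences contain the same events; $\mathrm{prop}(I),\mathrm{rej}(I),\mathrm{tent}(I),\mathrm{pend}(I)$ denote $\mathrm{prop}(\sigma),\mathrm{rej}(\sigma),\mathrm{tent}(\sigma),\mathrm{pend}_I(\sigma)$ for any maximal $I$-feasible $\sigma$. $I$ is resident-minimal if $\mathrm{prop}(I)$ equals the set of matches $(r,h)$ with $h$ on the list of $r$ in $I$. For a resident-minimal instance $I$, a (general) prescription for $I$ is a pair $(P,X)$ of sets of matches such that: (P1) $P\cap\mathrm{prop}(I)=\emptyset$; (P2) for each $r\in R$ there is at most one $h$ with $(r,h)\in P$; (P3) $X\subseteq\mathrm{tent}(I)$; (P4) $\mathrm{res}\,P\cap\mathrm{res}\,\mathrm{tent}(I)\subseteq\mathrm{res}\,X$; (P5) for each $h$, $|\mathrm{res}_h(P\cup(\mathrm{tent}(I)\setminus X))|\le q_h$, with equality if $\mathrm{res}_h X\ne\emptyset$; (P6') for each $h$, every member of $\mathrm{res}_h(P\cup((\mathrm{tent}(I)\setminus\mathrm{pend}(I))\setminus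 X))$ precedes all members of $\mathrm{res}_h(X\setminus\mathrm{pend}(I))$ in the list of $h$ in $I$, and if $\mathrm{res}_h(X\setminus\mathrm{pend}(I))\ne\emptyset$ then $\mathrm{res}_h\,\mathrm{pend}(I)\subseteq\mathrm{res}_h X$. When $I$ is hospital-complete (so $\mathrm{pend}(I)=\emptyset$), a prescription for $I$ is such a pair with (P6') read as (P6): every member of $\mathrm{res}_h(P\cup(\mathrm{tent}(I)\setminus X))$ precedes all members of $\mathrm{res}_h X$ in the list of $h$ in $I$. *)

theory Defs
  imports Main
begin

text \<open>Residents have type 'r, hospitals type 'h (so R and H are automatically disjoint).
  Lists are total functions; by convention the list of an object outside R (resp. H) is empty.\<close>

record ('r, 'h) inst =
  Res   :: "'r set"
  Hos   :: "'h set"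
  quota :: "'h \<Rightarrow> nat"
  rlist :: "'r \<Rightarrow> 'h list"
  hlist :: "'h \<Rightarrow> 'r list"

definition valid_inst :: "('r, 'h) inst \<Rightarrow> bool" where
  "valid_inst I \<longleftrightarrow> finite (Res I) \<and> finite (Hos I)
     \<and> (\<forall>h\<in>Hos I. quota I h > 0)
     \<and> (\<forall>r\<in>Res I. distinct (rlist I r) \<and> set (rlist I r) \<subseteq> Hos I)
     \<and> (\<forall>h\<in>Hos I. distinct (hlist I h) \<and> set (hlist I h) \<subseteq> Res I)
     \<and> (\<forall>r. r \<notin> Res I \<longrightarrow> rlist I r = [])
     \<and> (\<forall>h. h \<notin> Hos I \<longrightarrow> hlist I h = [])"

definition precedes :: "'a list \<Rightarrow> 'a \<Rightarrow> 'a \<Rightarrow> bool" where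
  "precedes L x y \<longleftrightarrow> (\<exists>i j. i < j \<and> j < length L \<and> L ! i = x \<and> L ! j = y)"

definition complete_list_of :: "('r, 'h) inst \<Rightarrow> bool" where
  "complete_list_of I \<longleftrightarrow> (\<forall>h\<in>Hos I. set (hlist I h) = Res I)"

abbreviation hospital_complete :: "('r, 'h) inst \<Rightarrow> bool" where
  "hospital_complete I \<equiv> complete_list_of I"

definition extension :: "('r, 'h) inst \<Rightarrow> ('r, 'h) inst \<Rightarrow> bool" where
  "extension I J \<longleftrightarrow> Res J = Res I \<and> Hos J = Hos I \<and> quota J = quota I
     \<and> (\<forall>r\<in>Res I. (\<exists>zs. rlist J r = rlist I r @ zs))
     \<and> (\<forall>h\<in>Hos I. (\<exists>zs. hlist J h = hlist I h @ zs))"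

definition resident_changeless :: "('r, 'h) inst \<Rightarrow> ('r, 'h) inst \<Rightarrow> bool" where
  "resident_changeless I J \<longleftrightarrow> (\<forall>r\<in>Res I. rlist J r = rlist I r)"

definition res_at :: "'h \<Rightarrow> ('r \<times> 'h) set \<Rightarrow> 'r set" where
  "res_at h M = {r. (r, h) \<in> M}"

definition res :: "('r \<times> 'h) set \<Rightarrow> 'r set" where
  "res M = {r. \<exists>h. (r, h) \<in> M}"

datatype ('r, 'h) event = Prop 'r 'h | Rej 'r 'h

definition props :: "('r, 'h) event list \<Rightarrow> ('r \<times> 'h) set" where
  "props \<sigma> = {(r, h). Prop r h \<in> set \<sigma>}"

definition rejs :: "('r, 'h) event list \<Rightarrow> ('r \<times> 'h) set" where
  "rejs \<sigma> = {(r, h). Rej r h \<in> set \<sigma>}"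

definition tents :: "('r, 'h) event list \<Rightarrow> ('r \<times> 'h) set" where
  "tents \<sigma> = props \<sigma> - rejs \<sigma>"

definition pends :: "('r, 'h) inst \<Rightarrow> ('r, 'h) event list \<Rightarrow> ('r \<times> 'h) set" where
  "pends I \<sigma> = {(r, h) \<in> tents \<sigma>. r \<notin> set (hlist I h)}"

definition ousted :: "('r, 'h) inst \<Rightarrow> ('r \<times> 'h) set \<Rightarrow> 'r \<Rightarrow> 'h \<Rightarrow> bool" where
  "ousted I M r h \<longleftrightarrow> (r, h) \<in> M
     \<and> card (set (hlist I h) \<inter> res_at h M) \<ge> quota I h
     \<and> (r \<notin> set (hlist I h)
        \<or> card {r' \<in> res_at h M. precedes (hlist I h) r' r} \<ge> quota I h)"

inductive feasible :: "('r, 'h) inst \<Rightarrow> ('r, 'h) event list \<Rightarrow> bool" for I where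
  feas_Nil: "feasible I []"
| feas_Prop: "\<lbrakk> feasible I \<sigma>; r \<notin> res (tents \<sigma>); (r, h) \<notin> props \<sigma>;
                h \<in> set (rlist I r);
                \<forall>h'. precedes (rlist I r) h' h \<longrightarrow> (r, h') \<in> rejs \<sigma> \<rbrakk>
              \<Longrightarrow> feasible I (\<sigma> @ [Prop r h])"
| feas_Rej: "\<lbrakk> feasible I \<sigma>; ousted I (props \<sigma>) r h; (r, h) \<notin> rejs \<sigma> \<rbrakk>
              \<Longrightarrow> feasible I (\<sigma> @ [Rej r h])"

definition maximal_feasible :: "('r, 'h) inst \<Rightarrow> ('r, 'h) event list \<Rightarrow> bool" where
  "maximal_feasible I \<sigma> \<longleftrightarrow> feasible I \<sigma> \<and> (\<forall>e. \<not> feasible I (\<sigma> @ [e]))"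

text \<open>prop(I), rej(I), tent(I), pend(I): computed from an (arbitrary) maximal I-feasible sequence\<close>

definition max_seq :: "('r, 'h) inst \<Rightarrow> ('r, 'h) event list" where
  "max_seq I = (SOME \<sigma>. maximal_feasible I \<sigma>)"

definition propI :: "('r, 'h) inst \<Rightarrow> ('r \<times> 'h) set" where
  "propI I = props (max_seq I)"

definition rejI :: "('r, 'h) inst \<Rightarrow> ('r \<times> 'h) set" where
  "rejI I = rejs (max_seq I)"

definition tentI :: "('r, 'h) inst \<Rightarrow> ('r \<times> 'h) set" where
  "tentI I = tents (max_seq I)"

definition pendI :: "('r, 'h) inst \<Rightarrow> ('r \<times> 'h) set" where
  "pendI I = pends I (max_seq I)"

definition resident_minimal :: "('r, 'h) inst \<Rightarrow> bool" where
  "resident_minimal I \<longleftrightarrow> propI I = {(r, h). h \<in> set (rlist I r)}"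

definition presc_base :: "('r, 'h) inst \<Rightarrow> ('r \<times> 'h) set \<Rightarrow> ('r \<times> 'h) set \<Rightarrow> bool" where
  "presc_base I P X \<longleftrightarrow>
     P \<subseteq> Res I \<times> Hos I \<and> X \<subseteq> Res I \<times> Hos I
     \<and> P \<inter> propI I = {}
     \<and> (\<forall>r h h'. (r, h) \<in> P \<longrightarrow> (r, h') \<in> P \<longrightarrow> h = h')
     \<and> X \<subseteq> tentI I
     \<and> res P \<inter> res (tentI I) \<subseteq> res X
     \<and> (\<forall>h\<in>Hos I. card (res_at h (P \<union> (tentI I - X))) \<le> quota I h
          \<and> (res_at h X \<noteq> {} \<longrightarrow> card (res_at h (P \<union> (tentI I - X))) = quota I h))"

definition general_prescription :: "('r, 'h) inst \<Rightarrow> ('r \<times> 'h) set \<Rightarrow> ('r \<times> 'h) set \<Rightarrow> bool" where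
  "general_prescription I P X \<longleftrightarrow> presc_base I P X
     \<and> (\<forall>h\<in>Hos I.
          (\<forall>r\<in>res_at h (P \<union> ((tentI I - pendI I) - X)).
             \<forall>r'\<in>res_at h (X - pendI I). precedes (hlist I h) r r')
          \<and> (res_at h (X - pendI I) \<noteq> {} \<longrightarrow> res_at h (pendI I) \<subseteq> res_at h X))"

text \<open>Prescription for a hospital-complete instance: (P1)--(P5) and (P6)\<close>
definition prescription :: "('r, 'h) inst \<Rightarrow> ('r \<times> 'h) set \<Rightarrow> ('r \<times> 'h) set \<Rightarrow> bool" where
  "prescription I P X \<longleftrightarrow> presc_base I P X
     \<and> (\<forall>h\<in>Hos I. \<forall>r\<in>res_at h (P \<union> (tentI I - X)).
          \<forall>r'\<in>res_at h X. precedes (hlist I h) r r')"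

end

theory Submission
  imports Defs
begin

lemma props_Prop[simp]: "props (\<sigma> @ [Prop r h]) = insert (r,h) (props \<sigma>)"
  by (auto simp: props_def)
lemma props_Rej[simp]: "props (\<sigma> @ [Rej r h]) = props \<sigma>"
  by (auto simp: props_def)
lemma rejs_Prop[simp]: "rejs (\<sigma> @ [Prop r h]) = rejs \<sigma>"
  by (auto simp: rejs_def)
lemma rejs_Rej[simp]: "rejs (\<sigma> @ [Rej r h]) = insert (r,h) (rejs \<sigma>)"
  by (auto simp: rejs_def)

lemma prec_set: "precedes L x y \<Longrightarrow> x \<in> set L \<and> y \<in> set L"
  by (auto simp: precedes_def)

lemma prec_irrefl: "distinct L \<Longrightarrow> \<not> precedes L x x"
  by (auto simp: precedes_def nth_eq_iff_index_eq)

lemma prec_trans: "distinct L \<Longrightarrow> precedes L x y \<Longrightarrow> precedes L y z \<Longrightarrow> precedes L x z"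
  unfolding precedes_def
proof (elim exE conjE)
  fix i j i' j'
  assume d: "distinct L" and a: "i < j" "j < length L" "L ! i = x" "L ! j = y"
     and b: "i' < j'" "j' < length L" "L ! i' = y" "L ! j' = z"
  have "i' < length L" using b by simp
  then have "j = i'" using d a b nth_eq_iff_index_eq by fastforce
  then show "\<exists>i j. i < j \<and> j < length L \<and> L ! i = x \<and> L ! j = z"
    using a b by (intro exI[of _ i] exI[of _ j']) simp
qed

lemma prec_total: "x \<in> set L \<Longrightarrow> y \<in> set L \<Longrightarrow> x \<noteq> y \<Longrightarrow> precedes L x y \<or> precedes L y x"
proof -
  assume "x \<in> set L" "y \<in> set L" "x \<noteq> y"
  then obtain i j where "i < length L" "L ! i = x" "j < length L" "L ! j = y"
    by (auto simp: in_set_conv_nth)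
  moreover have "i \<noteq> j" using calculation \<open>x \<noteq> y\<close> by auto
  ultimately show ?thesis unfolding precedes_def by (cases "i < j") force+
qed

lemma prec_append: "precedes L x y \<Longrightarrow> precedes (L @ zs) x y"
  unfolding precedes_def
proof (elim exE conjE)
  fix i j assume "i < j" "j < length L" "L ! i = x" "L ! j = y"
  then show "\<exists>i j. i < j \<and> j < length (L @ zs) \<and> (L @ zs) ! i = x \<and> (L @ zs) ! j = y"
    by (intro exI[of _ i] exI[of _ j]) (simp add: nth_append)
qed

lemma prec_prefix: "distinct (L @ zs) \<Longrightarrow> precedes (L @ zs) x y \<Longrightarrow> y \<in> set L \<Longrightarrow> precedes L x y"
  unfolding precedes_def
proof (elim exE conjE)
  fix i j
  assume d: "distinct (L @ zs)" and a: "i < j" "j < length (L @ zs)" "(L @ zs) ! i = x" "(L @ zs) ! j = y"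
    and y: "y \<in> set L"
  obtain k where k: "k < length L" "L ! k = y" using y by (auto simp: in_set_conv_nth)
  have k2: "(L @ zs) ! k = y" "k < length (L @ zs)" using k by (simp_all add: nth_append)
  then have "j = k" using d a nth_eq_iff_index_eq by metis
  then show "\<exists>i j. i < j \<and> j < length L \<and> L ! i = x \<and> L ! j = y"
    using a k by (intro exI[of _ i] exI[of _ j]) (simp add: nth_append)
qed

lemma prec_after: "distinct (L @ zs) \<Longrightarrow> x \<in> set L \<Longrightarrow> y \<in> set (L @ zs) \<Longrightarrow> y \<notin> set L
   \<Longrightarrow> precedes (L @ zs) x y"
proof -
  assume "x \<in> set L" "y \<in> set (L @ zs)" "y \<notin> set L"
  obtain i where i: "i < length L" "L ! i = x" using \<open>x \<in> set L\<close> by (auto simp: in_set_conv_nth)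
  obtain j where j: "j < length (L @ zs)" "(L @ zs) ! j = y"
      using \<open>y \<in> set (L @ zs)\<close> unfolding in_set_conv_nth by blast
  have "\<not> j < length L"
  proof
    assume "j < length L" then have "L ! j = y" using j by (simp add: nth_append)
    then show False using \<open>j < length L\<close> \<open>y \<notin> set L\<close> nth_mem by metis
  qed
  then show ?thesis unfolding precedes_def using i j
    by (intro exI[of _ i] exI[of _ j]) (simp add: nth_append)
qed

lemma F1: "feasible I \<sigma> \<Longrightarrow> rejs \<sigma> \<subseteq> props \<sigma>"
  by (induction rule: feasible.induct) (auto simp: ousted_def rejs_def props_def)

lemma F2: "feasible I \<sigma> \<Longrightarrow> (r,h) \<in> props \<sigma> \<Longrightarrow>
    h \<in> set (rlist I r) \<and> (\<forall>h'. precedes (rlist I r) h' h \<longrightarrow> (r,h') \<in> rejs \<sigma>)"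
  by (induction rule: feasible.induct) (auto simp: props_def rejs_def)

lemma F3: "feasible I \<sigma> \<Longrightarrow> (r,h) \<in> rejs \<sigma> \<Longrightarrow> \<exists>M. M \<subseteq> props \<sigma> \<and> ousted I M r h"
proof (induction rule: feasible.induct)
  case feas_Nil then show ?case by (simp add: rejs_def)
next
  case (feas_Prop \<sigma> r' h') then show ?case by auto
next
  case (feas_Rej \<sigma> r' h') then show ?case by auto
qed

lemma F6: "valid_inst I \<Longrightarrow> feasible I \<sigma> \<Longrightarrow> props \<sigma> \<subseteq> Res I \<times> Hos I"
proof
  fix x assume v: "valid_inst I" and f: "feasible I \<sigma>" and x: "x \<in> props \<sigma>"
  obtain r h where xe: "x = (r,h)" by force
  have "h \<in> set (rlist I r)" using F2[OF f] x xe by auto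
  then show "x \<in> Res I \<times> Hos I" using v xe unfolding valid_inst_def by force
qed

definition evs :: "('r,'h) inst \<Rightarrow> ('r,'h) event set" where
  "evs I = (\<lambda>(r,h). Prop r h) ` (Res I \<times> Hos I) \<union> (\<lambda>(r,h). Rej r h) ` (Res I \<times> Hos I)"

lemma F4: assumes v: "valid_inst I" shows "feasible I \<sigma> \<Longrightarrow> distinct \<sigma> \<and> set \<sigma> \<subseteq> evs I"
proof (induction rule: feasible.induct)
  case feas_Nil then show ?case by simp
next
  case (feas_Prop \<sigma> r h)
  have "feasible I (\<sigma> @ [Prop r h])" by (rule feasible.feas_Prop[OF feas_Prop.hyps])
  then have "(r,h) \<in> Res I \<times> Hos I" using F6[OF v] by fastforce
  then have "Prop r h \<in> evs I" unfolding evs_def by blast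
  moreover have "Prop r h \<notin> set \<sigma>" using feas_Prop.hyps(3) by (simp add: props_def)
  ultimately show ?case using feas_Prop.IH by simp
next
  case (feas_Rej \<sigma> r h)
  have "(r,h) \<in> props \<sigma>" using feas_Rej.hyps(2) by (simp add: ousted_def)
  then have "(r,h) \<in> Res I \<times> Hos I" using F6[OF v feas_Rej.hyps(1)] by auto
  then have "Rej r h \<in> evs I" unfolding evs_def by blast
  moreover have "Rej r h \<notin> set \<sigma>" using feas_Rej.hyps(3) by (simp add: rejs_def)
  ultimately show ?case using feas_Rej.IH by simp
qed

lemma F5: "valid_inst I \<Longrightarrow> maximal_feasible I (max_seq I)"
proof -
  assume v: "valid_inst I"
  have fin: "finite (evs I)" using v by (auto simp: evs_def valid_inst_def)
  have bound: "length \<sigma> \<le> card (evs I)" if "feasible I \<sigma>" for \<sigma>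
    using F4[OF v that] fin by (metis card_mono distinct_card)
  have "\<exists>\<sigma>. maximal_feasible I \<sigma>"
  proof (rule ccontr)
    assume "\<nexists>\<sigma>. maximal_feasible I \<sigma>"
    then have step: "\<And>\<sigma>. feasible I \<sigma> \<Longrightarrow> \<exists>e. feasible I (\<sigma> @ [e])"
      by (auto simp: maximal_feasible_def)
    have "\<exists>\<sigma>. feasible I \<sigma> \<and> length \<sigma> = n" for n
    proof (induction n)
      case 0 then show ?case using feas_Nil by auto
    next
      case (Suc n)
      then obtain \<sigma> where "feasible I \<sigma>" "length \<sigma> = n" by blast
      then show ?case using step by fastforce
    qed
    then obtain \<sigma> where "feasible I \<sigma>" "length \<sigma> = Suc (card (evs I))" by blast
    then show False using bound by fastforce
  qed
  then show ?thesis unfolding max_seq_def by (rule someI_ex)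
qed


lemma ousted_ext:
  assumes v: "valid_inst I" and v': "valid_inst I'" and e: "extension I I'"
    and MM: "M \<subseteq> M'" and o: "ousted I M r h"
  shows "ousted I' M' r h"
proof (cases "h \<in> Hos I")
  case False
  then have "hlist I h = []" using v by (simp add: valid_inst_def)
  then have "quota I h = 0" using o by (simp add: ousted_def)
  moreover have "hlist I' h = []" using v' e False by (simp add: valid_inst_def extension_def)
  ultimately show ?thesis using o MM e by (auto simp: ousted_def extension_def)
next
  case True
  obtain zs where zs: "hlist I' h = hlist I h @ zs" using e True by (auto simp: extension_def)
  define L where "L = hlist I h"
  have q: "quota I' h = quota I h" using e by (simp add: extension_def)
  have "distinct (hlist I' h)" using v' e True by (simp add: valid_inst_def extension_def)
  then have d: "distinct (L @ zs)" using zs unfolding L_def by simp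
  have finL: "finite (set (L @ zs))" by simp
  have rM: "(r,h) \<in> M'" using o MM by (auto simp: ousted_def)
  have c1: "quota I h \<le> card (set L \<inter> res_at h M)" using o by (simp add: ousted_def L_def)
  have c1': "card (set L \<inter> res_at h M) \<le> card (set (L @ zs) \<inter> res_at h M')"
    using MM by (intro card_mono) (auto simp: res_at_def)
  have c2: "r \<notin> set (L @ zs) \<or> quota I h \<le> card {r' \<in> res_at h M'. precedes (L @ zs) r' r}"
  proof (cases "r \<in> set (L @ zs)")
    case False then show ?thesis by simp
  next
    case rin: True
    show ?thesis
    proof (cases "r \<in> set L")
      case True
      then have "quota I h \<le> card {r' \<in> res_at h M. precedes L r' r}"
        using o by (simp add: ousted_def L_def)
      also have "\<dots> \<le> card {r' \<in> res_at h M'. precedes (L @ zs) r' r}"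
        using MM prec_append
        by (intro card_mono[OF finite_subset[OF _ finL]]) (auto simp: res_at_def dest: prec_set)
      finally show ?thesis by simp
    next
      case False
      have "card (set L \<inter> res_at h M) \<le> card {r' \<in> res_at h M'. precedes (L @ zs) r' r}"
        using MM prec_after[OF d _ rin False]
        by (intro card_mono[OF finite_subset[OF _ finL]]) (auto simp: res_at_def dest: prec_set)
      then show ?thesis using c1 by simp
    qed
  qed
  show ?thesis unfolding ousted_def using rM c1 c1' c2 q zs L_def by simp
qed

lemma rlist_eq:
  assumes v: "valid_inst I" and v': "valid_inst I'" and e: "extension I I'"
    and rc: "resident_changeless I I'"
  shows "rlist I' = rlist I"
proof
  fix r show "rlist I' r = rlist I r"
    using v v' e rc by (cases "r \<in> Res I") (auto simp: valid_inst_def extension_def resident_changeless_def)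
qed

lemma C:
  assumes v: "valid_inst I" and v': "valid_inst I'" and e: "extension I I'"
    and rl: "rlist I' = rlist I" and m': "maximal_feasible I' \<sigma>'"
  shows "feasible I \<sigma> \<Longrightarrow> props \<sigma> \<subseteq> props \<sigma>' \<and> rejs \<sigma> \<subseteq> rejs \<sigma>'"
proof (induction rule: feasible.induct)
  case feas_Nil then show ?case by (simp add: props_def rejs_def)
next
  case (feas_Prop \<tau> r h)
  have f': "feasible I' \<sigma>'" and nx: "\<And>e. \<not> feasible I' (\<sigma>' @ [e])"
    using m' by (auto simp: maximal_feasible_def)
  have hin: "h \<in> set (rlist I' r)" using feas_Prop.hyps(4) rl by simp
  have pre: "\<forall>h'. precedes (rlist I' r) h' h \<longrightarrow> (r, h') \<in> rejs \<sigma>'"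
    using feas_Prop.hyps(5) feas_Prop.IH rl by auto
  have "(r,h) \<in> props \<sigma>'"
  proof (rule ccontr)
    assume np: "(r,h) \<notin> props \<sigma>'"
    show False
    proof (cases "r \<in> res (tents \<sigma>')")
      case False
      have "feasible I' (\<sigma>' @ [Prop r h])" by (rule feasible.feas_Prop[OF f' False np hin pre])
      then show False using nx by blast
    next
      case True
      then obtain h'' where t: "(r,h'') \<in> tents \<sigma>'" by (auto simp: res_def)
      then have p'': "(r,h'') \<in> props \<sigma>'" and nr: "(r,h'') \<notin> rejs \<sigma>'" by (auto simp: tents_def)
      have F2': "h'' \<in> set (rlist I' r)" "\<forall>h'. precedes (rlist I' r) h' h'' \<longrightarrow> (r, h') \<in> rejs \<sigma>'"
        using F2[OF f' p''] by auto
      have "h'' \<noteq> h" using np p'' by auto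
      then have "precedes (rlist I' r) h'' h \<or> precedes (rlist I' r) h h''"
        using prec_total F2'(1) hin by metis
      then show False
      proof
        assume "precedes (rlist I' r) h'' h" then show False using pre nr by blast
      next
        assume "precedes (rlist I' r) h h''"
        then have "(r,h) \<in> rejs \<sigma>'" using F2'(2) by blast
        then show False using F1[OF f'] np by blast
      qed
    qed
  qed
  then show ?case using feas_Prop.IH by simp
next
  case (feas_Rej \<tau> r h)
  have f': "feasible I' \<sigma>'" and nx: "\<And>e. \<not> feasible I' (\<sigma>' @ [e])"
    using m' by (auto simp: maximal_feasible_def)
  have o: "ousted I' (props \<sigma>') r h"
    using ousted_ext[OF v v' e _ feas_Rej.hyps(2)] feas_Rej.IH by blast
  have "(r,h) \<in> rejs \<sigma>'"
  proof (rule ccontr)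
    assume "(r,h) \<notin> rejs \<sigma>'"
    then have "feasible I' (\<sigma>' @ [Rej r h])" using feasible.feas_Rej[OF f' o] by blast
    then show False using nx by blast
  qed
  then show ?case using feas_Rej.IH by simp
qed

lemma H2:
  assumes v: "valid_inst I" and c: "complete_list_of I" and f: "feasible I \<sigma>"
    and rj: "(r',h) \<in> rejs \<sigma>"
  shows "quota I h \<le> card (res_at h (tents \<sigma>))"
proof -
  have "(r',h) \<in> props \<sigma>" using F1[OF f] rj by blast
  then have rh: "r' \<in> Res I" "h \<in> Hos I" using F6[OF v f] by auto
  define L where "L = hlist I h"
  have sL: "set L = Res I" using c rh by (simp add: complete_list_of_def L_def)
  have dL: "distinct L" using v rh by (simp add: valid_inst_def L_def)
  obtain k where k: "k < length L" "L ! k = r'" using rh sL by (metis in_set_conv_nth)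
  define Q where "Q i \<longleftrightarrow> i < length L \<and> (L ! i, h) \<in> rejs \<sigma>" for i
  have Qk: "Q k" using k rj by (simp add: Q_def)
  define i0 where "i0 = (LEAST i. Q i)"
  have Qi0: "Q i0" using Qk unfolding i0_def by (rule LeastI)
  have minQ: "\<not> Q j" if "j < i0" for j using that unfolding i0_def by (rule not_less_Least)
  define r0 where "r0 = L ! i0"
  have r0rej: "(r0, h) \<in> rejs \<sigma>" using Qi0 by (simp add: Q_def r0_def)
  obtain M where M: "M \<subseteq> props \<sigma>" "ousted I M r0 h" using F3[OF f r0rej] by blast
  have r0L: "r0 \<in> set L" using Qi0 by (simp add: Q_def r0_def)
  have "quota I h \<le> card {r'' \<in> res_at h M. precedes L r'' r0}"
    using M(2) r0L by (simp add: ousted_def L_def)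
  also have "\<dots> \<le> card (res_at h (tents \<sigma>))"
  proof (rule card_mono)
    have "res_at h (tents \<sigma>) \<subseteq> Res I" using F6[OF v f] by (auto simp: res_at_def tents_def)
    then show "finite (res_at h (tents \<sigma>))" using v finite_subset by (auto simp: valid_inst_def)
    show "{r'' \<in> res_at h M. precedes L r'' r0} \<subseteq> res_at h (tents \<sigma>)"
    proof
      fix x assume x: "x \<in> {r'' \<in> res_at h M. precedes L r'' r0}"
      then obtain i j where ij: "i < j" "j < length L" "L ! i = x" "L ! j = r0"
        by (auto simp: precedes_def)
      have "i0 < length L" using Qi0 by (simp add: Q_def)
      then have "j = i0" using ij dL nth_eq_iff_index_eq unfolding r0_def by metis
      then have "\<not> Q i" using minQ ij by simp
      then have "(x,h) \<notin> rejs \<sigma>" using ij by (simp add: Q_def)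
      moreover have "(x,h) \<in> props \<sigma>" using x M(1) by (auto simp: res_at_def)
      ultimately show "x \<in> res_at h (tents \<sigma>)" by (simp add: res_at_def tents_def)
    qed
  qed
  finally show ?thesis .
qed

lemma H1:
  assumes v: "valid_inst I" and c: "complete_list_of I" and m: "maximal_feasible I \<sigma>"
    and rj: "(r',h) \<in> rejs \<sigma>" and t: "(t,h) \<in> tents \<sigma>"
  shows "precedes (hlist I h) t r'"
proof (rule ccontr)
  assume np: "\<not> precedes (hlist I h) t r'"
  have f: "feasible I \<sigma>" and nx: "\<And>e. \<not> feasible I (\<sigma> @ [e])"
    using m by (auto simp: maximal_feasible_def)
  have "(r',h) \<in> props \<sigma>" using F1[OF f] rj by blast
  then have rh: "r' \<in> Res I" "h \<in> Hos I" using F6[OF v f] by auto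
  have tp: "(t,h) \<in> props \<sigma>" and tnr: "(t,h) \<notin> rejs \<sigma>" using t by (auto simp: tents_def)
  then have tR: "t \<in> Res I" using F6[OF v f] by auto
  define L where "L = hlist I h"
  have sL: "set L = Res I" using c rh by (simp add: complete_list_of_def L_def)
  have dL: "distinct L" using v rh by (simp add: valid_inst_def L_def)
  have "t \<noteq> r'" using rj tnr by auto
  then have pr: "precedes L r' t" using prec_total[of t L r'] sL tR rh np L_def by auto
  obtain M where M: "M \<subseteq> props \<sigma>" "ousted I M r' h" using F3[OF f rj] by blast
  have A: "quota I h \<le> card (set L \<inter> res_at h M)"
    and B: "quota I h \<le> card {r'' \<in> res_at h M. precedes L r'' r'}"
    using M(2) rh sL by (auto simp: ousted_def L_def)
  have A': "quota I h \<le> card (set L \<inter> res_at h (props \<sigma>))"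
  proof -
    have "card (set L \<inter> res_at h M) \<le> card (set L \<inter> res_at h (props \<sigma>))"
      using M(1) by (intro card_mono) (auto simp: res_at_def)
    then show ?thesis using A by simp
  qed
  have "card {r'' \<in> res_at h M. precedes L r'' r'} \<le> card {r'' \<in> res_at h (props \<sigma>). precedes L r'' t}"
    using M(1) prec_trans[OF dL _ pr]
    by (intro card_mono[OF finite_subset[of _ "set L"]]) (auto simp: res_at_def dest: prec_set)
  then have B': "quota I h \<le> card {r'' \<in> res_at h (props \<sigma>). precedes L r'' t}" using B by simp
  have "ousted I (props \<sigma>) t h" unfolding ousted_def using tp A' B' L_def by simp
  then have "feasible I (\<sigma> @ [Rej t h])" using feasible.feas_Rej[OF f] tnr by blast
  then show False using nx by blast
qed


theorem lemma3:
  fixes I I' :: "('r, 'h) inst" and P Y :: "('r \<times> 'h) set"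
  assumes "valid_inst I" and "valid_inst I'"
    and "resident_minimal I"
    and "extension I I'" and "resident_changeless I I'" and "hospital_complete I'"
    and "prescription I' P Y"
  shows "general_prescription I P (Y \<union> (rejI I' - rejI I))"
proof -
  note v = assms(1) and v' = assms(2) and rm = assms(3) and e = assms(4) and rc = assms(5)
    and hc = assms(6) and pr = assms(7)
  define \<sigma> where "\<sigma> = max_seq I"
  define \<sigma>' where "\<sigma>' = max_seq I'"
  have m: "maximal_feasible I \<sigma>" using F5[OF v] \<sigma>_def by simp
  have m': "maximal_feasible I' \<sigma>'" using F5[OF v'] \<sigma>'_def by simp
  have f: "feasible I \<sigma>" and f': "feasible I' \<sigma>'" using m m' by (auto simp: maximal_feasible_def)
  have rl: "rlist I' = rlist I" by (rule rlist_eq[OF v v' e rc])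
  have C1: "props \<sigma> \<subseteq> props \<sigma>'" "rejs \<sigma> \<subseteq> rejs \<sigma>'" using C[OF v v' e rl m' f] by auto
  have pI: "props \<sigma> = {(r, h). h \<in> set (rlist I r)}"
    using rm by (simp add: resident_minimal_def propI_def \<sigma>_def)
  have "props \<sigma>' \<subseteq> {(r, h). h \<in> set (rlist I r)}"
  proof
    fix x assume "x \<in> props \<sigma>'"
    then show "x \<in> {(r, h). h \<in> set (rlist I r)}" using F2[OF f'] rl by (cases x) auto
  qed
  then have PP: "propI I' = propI I" using C1 pI by (auto simp: propI_def \<sigma>_def \<sigma>'_def)
  have RR: "rejI I \<subseteq> rejI I'" using C1 by (simp add: rejI_def \<sigma>_def \<sigma>'_def)
  have RP: "rejI I' \<subseteq> propI I" using F1[OF f'] PP by (simp add: rejI_def propI_def \<sigma>'_def)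
  have TI: "tentI I = propI I - rejI I" by (simp add: tentI_def propI_def rejI_def tents_def \<sigma>_def)
  have TI': "tentI I' = propI I - rejI I'"
    using PP by (simp add: tentI_def propI_def rejI_def tents_def \<sigma>'_def)
  have PRH: "propI I \<subseteq> Res I \<times> Hos I" using F6[OF v f] by (simp add: propI_def \<sigma>_def)
  have eq: "Res I' = Res I" "Hos I' = Hos I" "quota I' = quota I" using e by (auto simp: extension_def)
  have pb: "presc_base I' P Y" and P6: "\<forall>h\<in>Hos I'. \<forall>r\<in>res_at h (P \<union> (tentI I' - Y)).
          \<forall>r'\<in>res_at h Y. precedes (hlist I' h) r r'"
    using pr by (auto simp: prescription_def)
  have PRH': "P \<subseteq> Res I \<times> Hos I" and PprE: "P \<inter> propI I = {}"
    and Pfun: "\<forall>r h h'. (r, h) \<in> P \<longrightarrow> (r, h') \<in> P \<longrightarrow> h = h'"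
    and YT: "Y \<subseteq> tentI I'" and P4: "res P \<inter> res (tentI I') \<subseteq> res Y"
    and P5: "\<forall>h\<in>Hos I. card (res_at h (P \<union> (tentI I' - Y))) \<le> quota I h
          \<and> (res_at h Y \<noteq> {} \<longrightarrow> card (res_at h (P \<union> (tentI I' - Y))) = quota I h)"
    using pb PP eq by (auto simp: presc_base_def)
  define X where "X = Y \<union> (rejI I' - rejI I)"
  have XT: "X \<subseteq> tentI I" using YT RR RP TI TI' X_def by auto
  have TX: "tentI I - X = tentI I' - Y" using YT RR RP TI TI' X_def by auto
  have finres: "finite (res_at h (P \<union> (tentI I' - Y)))" for h
  proof -
    have "res_at h (P \<union> (tentI I' - Y)) \<subseteq> Res I" using PRH PRH' TI' by (auto simp: res_at_def)
    then show ?thesis using v finite_subset by (auto simp: valid_inst_def)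
  qed
  have Tq: "quota I h \<le> card (res_at h (tentI I'))" if "(r', h) \<in> rejI I'" for r' h
    using H2[OF v' hc f' that[unfolded rejI_def \<sigma>'_def[symmetric]]] eq
    by (simp add: tentI_def \<sigma>'_def)
  have TR: "precedes (hlist I' h) t r'" if "(r', h) \<in> rejI I'" "(t,h) \<in> tentI I'" for r' h t
    using H1[OF v' hc m'] that by (simp add: rejI_def tentI_def \<sigma>'_def)
  have dl': "distinct (hlist I' h)" if "h \<in> Hos I" for h using v' eq that by (simp add: valid_inst_def)
  have Core: "precedes (hlist I h) r r'"
    if h: "h \<in> Hos I" and r: "r \<in> res_at h (P \<union> (tentI I' - Y))" and r': "(r', h) \<in> X"
      and r'L: "r' \<in> set (hlist I h)" for h r r'
  proof -
    obtain zs where zs: "hlist I' h = hlist I h @ zs" using e h by (auto simp: extension_def)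
    have "precedes (hlist I' h) r r'"
    proof (cases "(r',h) \<in> Y")
      case True then show ?thesis using P6 h r eq by (auto simp: res_at_def)
    next
      case False
      then have rj: "(r',h) \<in> rejI I'" using r' X_def by auto
      show ?thesis
      proof (cases "(r,h) \<in> tentI I' - Y")
        case True then show ?thesis using TR[OF rj] by auto
      next
        case False
        then have rP: "(r,h) \<in> P" using r by (auto simp: res_at_def)
        have rT: "r \<notin> res_at h (tentI I')" using rP PprE TI' by (auto simp: res_at_def)
        have "res_at h Y \<noteq> {}"
        proof
          assume Y0: "res_at h Y = {}"
          have eqs: "res_at h (P \<union> (tentI I' - Y)) \<supseteq> insert r (res_at h (tentI I'))"
            using Y0 rP by (auto simp: res_at_def)
          have "card (insert r (res_at h (tentI I'))) \<le> card (res_at h (P \<union> (tentI I' - Y)))"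
            by (rule card_mono[OF finres eqs])
          moreover have "finite (res_at h (tentI I'))"
            using finres[of h] by (rule finite_subset[rotated]) (insert Y0, auto simp: res_at_def)
          ultimately have "card (res_at h (tentI I')) + 1 \<le> card (res_at h (P \<union> (tentI I' - Y)))"
            using rT by simp
          then show False using P5 h Tq[OF rj] by fastforce
        qed
        then obtain y where y: "(y,h) \<in> Y" by (auto simp: res_at_def)
        have "precedes (hlist I' h) r y" using P6 h r eq y by (auto simp: res_at_def)
        moreover have "precedes (hlist I' h) y r'" using TR[OF rj] y YT by auto
        ultimately show ?thesis using prec_trans dl'[OF h] by metis
      qed
    qed
    then show ?thesis using prec_prefix[of "hlist I h" zs r r'] dl'[OF h] zs r'L by simp
  qed
  have pend: "pendI I = {(r, h) \<in> tentI I. r \<notin> set (hlist I h)}"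
    by (simp add: pendI_def pends_def tentI_def \<sigma>_def)
  show ?thesis
    unfolding X_def[symmetric] general_prescription_def presc_base_def
  proof (intro conjI ballI)
    show "P \<subseteq> Res I \<times> Hos I" by (rule PRH')
    show "X \<subseteq> Res I \<times> Hos I" using XT TI PRH by auto
    show "P \<inter> propI I = {}" by (rule PprE)
    show "\<forall>r h h'. (r, h) \<in> P \<longrightarrow> (r, h') \<in> P \<longrightarrow> h = h'" by (rule Pfun)
    show "X \<subseteq> tentI I" by (rule XT)
    show "res P \<inter> res (tentI I) \<subseteq> res X"
    proof
      fix r assume "r \<in> res P \<inter> res (tentI I)"
      then obtain h1 where rP: "r \<in> res P" and t1: "(r,h1) \<in> tentI I" by (auto simp: res_def)
      show "r \<in> res X"
      proof (cases "(r,h1) \<in> rejI I'")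
        case True then have "(r,h1) \<in> X" using t1 TI X_def by auto
        then show ?thesis by (auto simp: res_def)
      next
        case False then have "(r,h1) \<in> tentI I'" using t1 TI TI' by auto
        then have "r \<in> res Y" using P4 rP by (auto simp: res_def)
        then show ?thesis by (auto simp: res_def X_def)
      qed
    qed
    fix h assume h: "h \<in> Hos I"
    show "card (res_at h (P \<union> (tentI I - X))) \<le> quota I h" using P5 h TX by simp
    show "res_at h X \<noteq> {} \<longrightarrow> card (res_at h (P \<union> (tentI I - X))) = quota I h"
    proof
      assume "res_at h X \<noteq> {}"
      show "card (res_at h (P \<union> (tentI I - X))) = quota I h"
      proof (cases "res_at h Y = {}")
        case False then show ?thesis using P5 h TX by simp
      next
        case Y0: True
        then obtain r' where "(r',h) \<in> rejI I'" using \<open>res_at h X \<noteq> {}\<close> by (auto simp: res_at_def X_def)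
        then have q: "quota I h \<le> card (res_at h (tentI I'))" by (rule Tq)
        have "res_at h (tentI I') \<subseteq> res_at h (P \<union> (tentI I' - Y))" using Y0 by (auto simp: res_at_def)
        then have "card (res_at h (tentI I')) \<le> card (res_at h (P \<union> (tentI I' - Y)))"
          by (rule card_mono[OF finres])
        then show ?thesis using q P5 h TX by fastforce
      qed
    qed
    show "precedes (hlist I h) r r'"
      if r: "r \<in> res_at h (P \<union> (tentI I - pendI I - X))" and r': "r' \<in> res_at h (X - pendI I)" for r r'
    proof -
      have r2: "r \<in> res_at h (P \<union> (tentI I' - Y))" using r TX by (auto simp: res_at_def)
      have r'X: "(r',h) \<in> X" using r' by (auto simp: res_at_def)
      have "r' \<in> set (hlist I h)" using r' XT pend by (auto simp: res_at_def)
      then show "precedes (hlist I h) r r'" using Core[OF h r2 r'X] by simp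
    qed
    show "res_at h (X - pendI I) \<noteq> {} \<longrightarrow> res_at h (pendI I) \<subseteq> res_at h X"
    proof (intro impI subsetI)
      fix r assume ne: "res_at h (X - pendI I) \<noteq> {}" and r: "r \<in> res_at h (pendI I)"
      obtain r' where r': "r' \<in> res_at h (X - pendI I)" using ne by auto
      have r'X: "(r',h) \<in> X" using r' by (auto simp: res_at_def)
      have r'L: "r' \<in> set (hlist I h)" using r' XT pend by (auto simp: res_at_def)
      have rt: "(r,h) \<in> tentI I" and rL: "r \<notin> set (hlist I h)" using r pend by (auto simp: res_at_def)
      show "r \<in> res_at h X"
      proof (rule ccontr)
        assume "r \<notin> res_at h X"
        then have "(r,h) \<in> tentI I - X" using rt by (auto simp: res_at_def)
        then have "r \<in> res_at h (P \<union> (tentI I' - Y))" using TX by (auto simp: res_at_def)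
        then have "precedes (hlist I h) r r'" using Core[OF h _ r'X r'L] by simp
        then show False using rL prec_set by metis
      qed
    qed
  qed
qed

end
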